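(* Let $c\in\operatorname{int}\Delta$ and let $\underline M$ be as defined below. For every $M>\underline M$ the replicator–mutator dynamics $\dot x=\phi^M(x)$ has exactly one mutation equilibrium $x^M\in\Delta$, and the map $\mathcal M:(\underline M,\infty)\to\Delta$, $M\mapsto x^M$, is continuously differentiable.
   Context: Let $I=\{1,\dots,N\}$ be a finite set of populations; population $i$ has the finite type set $S_i=\{1,\dots,n_i\}$. Let $S=\{(i,h): i\in I, h\in S_i\}$, $\Delta_i=\{x_i\in\mathbb R^{n_i}_{\ge 0}:\sum_{h\le n_i}x_{ih}=1\}$, $\Delta=\prod_{i\in I}\Delta_i\subset\mathbb R^S$, and $\operatorname{int}\Delta=\{x\in\Delta: x_{ih}>0 \text{ for all }(i,h)\in S\}$. For each $(i,h)\in S$ let $f_{ih}\in C^1(U,\mathbb R)$ for some open $U\supset\Delta$, with $\partial f_{ih}/\partial x_{ik}=0$ for all $i\in I$, $h,k\in S_i$. Put $\bar f_i(x)=\sum_{h\le n_i}x_{ih}f_{ih}(x)$, $\phi_{ih}(x)=x_{ih}(f_{ih}(x)-\bar f_i(x))$, and for $M\ge0$, $c\in\operatorname{int}\Delta$, $\phi^M_{ih}(x)=\phi_{ih}(x)+M(c_{ih}-x_{ih})$. A mutation equilibrium for $M$ is $x\in\Delta$ with $\phi^M(x)=0$. Reduced system: for each $i$ substitute $x_{in_i}=1-\sum_{k<n_i}x_{ik}$ and drop the equation for $x_{in_i}$, yielding $\tilde\phi,\tilde\phi^M$ with $D\tilde\phi^M=D\tilde\phi-M\,\mathrm{Id}$.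 Define $\underline M=\max\bigl(0,\sup\{\operatorname{Re}\lambda:\lambda\text{ eigenvalue of }D\tilde\phi(x),x\in\Delta\}\bigr)$. *)

theory Defs
  imports "HOL-Analysis.Analysis"
begin

text \<open>The finite index type 's plays the role of S = {(i,h)}; pop s is the
population of type s; the fibres of pop are the type sets S_i, ordered by the
linear order on 's (so the last type of population i is the maximum of its fibre).\<close>

definition pop_simplex :: "('s::finite \<Rightarrow> 'i) \<Rightarrow> ((real,'s) vec) set" where
  "pop_simplex pop = {x. (\<forall>s. 0 \<le> x$s) \<and> (\<forall>i. (\<Sum>s\<in>{t. pop t = i}. x$s) = 1)}"

definition int_simplex :: "('s::finite \<Rightarrow> 'i) \<Rightarrow> ((real,'s) vec) set" where
  "int_simplex pop = {x \<in> pop_simplex pop. \<forall>s. 0 < x$s}"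

definition fbar :: "('s::finite \<Rightarrow> 'i) \<Rightarrow> ('s \<Rightarrow> (real,'s) vec \<Rightarrow> real) \<Rightarrow> 'i \<Rightarrow> (real,'s) vec \<Rightarrow> real" where
  "fbar pop f i x = (\<Sum>t\<in>{t. pop t = i}. x$t * f t x)"

definition repl :: "('s::finite \<Rightarrow> 'i) \<Rightarrow> ('s \<Rightarrow> (real,'s) vec \<Rightarrow> real) \<Rightarrow> (real,'s) vec \<Rightarrow> (real,'s) vec" where
  "repl pop f x = (\<chi> s. x$s * (f s x - fbar pop f (pop s) x))"

definition repl_mut :: "('s::finite \<Rightarrow> 'i) \<Rightarrow> ('s \<Rightarrow> (real,'s) vec \<Rightarrow> real) \<Rightarrow> real \<Rightarrow> (real,'s) vec \<Rightarrow> (real,'s) vec \<Rightarrow> (real,'s) vec" where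
  "repl_mut pop f M c x = repl pop f x + M *\<^sub>R (c - x)"

definition last_type :: "('s::{finite,linorder} \<Rightarrow> 'i) \<Rightarrow> 'i \<Rightarrow> 's" where
  "last_type pop i = Max {t. pop t = i}"

definition dropped :: "('s::{finite,linorder} \<Rightarrow> 'i) \<Rightarrow> 's \<Rightarrow> bool" where
  "dropped pop s \<longleftrightarrow> s = last_type pop (pop s)"

definition embed :: "('s::{finite,linorder} \<Rightarrow> 'i) \<Rightarrow> (real,'s) vec \<Rightarrow> (real,'s) vec" where
  "embed pop y = (\<chi> s. if dropped pop s then 1 - (\<Sum>t\<in>{t. pop t = pop s \<and> t \<noteq> s}. y$t) else y$s)"

text \<open>Reduced system, embedded in R^S: the dropped coordinates are ignored as
inputs and their equations are replaced by 0.\<close>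
definition reduced :: "('s::{finite,linorder} \<Rightarrow> 'i) \<Rightarrow> ('s \<Rightarrow> (real,'s) vec \<Rightarrow> real) \<Rightarrow> (real,'s) vec \<Rightarrow> (real,'s) vec" where
  "reduced pop f y = (\<chi> s. if dropped pop s then 0 else repl pop f (embed pop y) $ s)"

definition reduced_jacobian :: "('s::{finite,linorder} \<Rightarrow> 'i) \<Rightarrow> ('s \<Rightarrow> (real,'s) vec \<Rightarrow> real) \<Rightarrow> (real,'s) vec \<Rightarrow> ((real,'s) vec,'s) vec" where
  "reduced_jacobian pop f x = matrix (frechet_derivative (reduced pop f) (at x))"

text \<open>Eigenvalues of the reduced Jacobian D(tilde phi)(x): eigenvectors supported on
the non-dropped coordinates (the reduced coordinates).\<close>
definition reduced_eigenvalue :: "('s::{finite,linorder} \<Rightarrow> 'i) \<Rightarrow> ('s \<Rightarrow> (real,'s) vec \<Rightarrow> real) \<Rightarrow> (real,'s) vec \<Rightarrow> complex \<Rightarrow> bool" where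
  "reduced_eigenvalue pop f x lam \<longleftrightarrow>
     (\<exists>v::(complex,'s) vec. v \<noteq> 0 \<and> (\<forall>s. dropped pop s \<longrightarrow> v$s = 0) \<and>
        (\<chi> i j. complex_of_real (reduced_jacobian pop f x $ i $ j)) *v v = lam *s v)"

text \<open>Lower threshold max(0, sup Re(spec)); sup of the empty set is taken as -infinity.\<close>
definition Mlow :: "('s::{finite,linorder} \<Rightarrow> 'i) \<Rightarrow> ('s \<Rightarrow> (real,'s) vec \<Rightarrow> real) \<Rightarrow> real" where
  "Mlow pop f = (let E = {Re lam | lam x. x \<in> pop_simplex pop \<and> reduced_eigenvalue pop f x lam}
                 in if E = {} then 0 else max 0 (Sup E))"

end

theory Submission
  imports Defs
begin


lemma continuation_unique:
  fixes P :: "real \<Rightarrow> 'v::metric_space set" and a :: real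
  assumes ne: "\<And>M. M > a \<Longrightarrow> P M \<noteq> {}"
   and big: "\<exists>M>a. \<forall>x\<in>P M. \<forall>y\<in>P M. x = y"
   and K: "compact K" "\<And>M. M > a \<Longrightarrow> P M \<subseteq> K"
   and clo: "\<And>Mn xn M x. (\<And>n. Mn n > a) \<Longrightarrow> (\<And>n. xn n \<in> P (Mn n)) \<Longrightarrow> Mn \<longlonglongrightarrow> M \<Longrightarrow> M > a \<Longrightarrow> xn \<longlonglongrightarrow> x \<Longrightarrow> x \<in> P M"
   and loc: "\<And>M0 x0. M0 > a \<Longrightarrow> x0 \<in> P M0 \<Longrightarrow> \<exists>e>0. \<exists>d>0. \<exists>b. continuous_on (ball M0 e) b \<and> b M0 = x0 \<and>
        (\<forall>M\<in>ball M0 e. b M \<in> P M) \<and> (\<forall>M\<in>ball M0 e. \<forall>x\<in>P M. dist x x0 < d \<longrightarrow> x = b M)"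
  shows "\<forall>M>a. \<exists>!x. x \<in> P M"
proof -
  define T where "T = {M. M > a \<and> (\<forall>x\<in>P M. \<forall>y\<in>P M. x = y)}"
  have open1: "M0 \<in> interior T" if "M0 \<in> T" for M0
  proof -
    have M0: "M0 > a" and u: "\<forall>x\<in>P M0. \<forall>y\<in>P M0. x = y" using that by (auto simp: T_def)
    obtain x0 where x0: "x0 \<in> P M0" using ne[OF M0] by blast
    obtain e d b where e: "e > 0" and d: "d > 0" and bP: "\<forall>M\<in>ball M0 e. b M \<in> P M"
      and bu: "\<forall>M\<in>ball M0 e. \<forall>x\<in>P M. dist x x0 < d \<longrightarrow> x = b M"
      using loc[OF M0 x0] by blast
    have "\<exists>r>0. \<forall>M. dist M M0 < r \<longrightarrow> M > a \<longrightarrow> (\<forall>x\<in>P M. dist x x0 < d)"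
    proof (rule ccontr)
      assume neg: "\<not> ?thesis"
      have "\<forall>n::nat. \<exists>M x. dist M M0 < 1/(real n+1) \<and> M > a \<and> x \<in> P M \<and> \<not> dist x x0 < d"
      proof
        fix n :: nat
        have "(1::real)/(real n+1) > 0" by simp
        then show "\<exists>M x. dist M M0 < 1/(real n+1) \<and> M > a \<and> x \<in> P M \<and> \<not> dist x x0 < d"
          using neg by blast
      qed
      then obtain Mn xn where Mn: "\<And>n. dist (Mn n) M0 < 1/(real n+1)" "\<And>n. Mn n > a"
        and xn: "\<And>n. xn n \<in> P (Mn n)" "\<And>n. \<not> dist (xn n) x0 < d" by metis
      have "\<forall>n. xn n \<in> K" using xn K Mn by blast
      then obtain l r where l: "l \<in> K" and r: "strict_mono r" and lim: "(xn \<circ> r) \<longlonglongrightarrow> l"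
        using K(1) unfolding compact_eq_seq_compact_metric seq_compact_def by blast
      have MnL: "Mn \<longlonglongrightarrow> M0"
      proof (rule tendsto_sandwich[of "\<lambda>n. M0 - 1/(real n+1)" _ _ "\<lambda>n. M0 + 1/(real n+1)"])
        show "\<forall>\<^sub>F n in sequentially. M0 - 1 / (real n + 1) \<le> Mn n"
          using Mn(1) by (auto simp: dist_real_def abs_less_iff intro!: always_eventually) (smt (verit))
        show "\<forall>\<^sub>F n in sequentially. Mn n \<le> M0 + 1 / (real n + 1)"
          using Mn(1) by (auto simp: dist_real_def abs_less_iff intro!: always_eventually) (smt (verit))
        have "(\<lambda>n. 1 / (real n + 1)) \<longlonglongrightarrow> 0" using LIMSEQ_inverse_real_of_nat by (simp add: inverse_eq_divide add.commute)
        then show "(\<lambda>n. M0 - 1 / (real n + 1)) \<longlonglongrightarrow> M0" "(\<lambda>n. M0 + 1 / (real n + 1)) \<longlonglongrightarrow> M0"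
          using tendsto_diff[of "\<lambda>_. M0"] tendsto_add[of "\<lambda>_. M0"] by (auto intro: tendsto_eq_intros)
      qed
      have "l \<in> P M0"
        by (rule clo[of "Mn \<circ> r" "xn \<circ> r"]) (use Mn xn M0 lim LIMSEQ_subseq_LIMSEQ[OF MnL r] in auto)
      then have "l = x0" using u x0 by blast
      moreover have "dist l x0 \<ge> d"
      proof (rule tendsto_lowerbound)
        show "((\<lambda>n. dist ((xn \<circ> r) n) x0) \<longlongrightarrow> dist l x0) sequentially"
          using lim by (intro tendsto_intros)
        show "\<forall>\<^sub>F n in sequentially. d \<le> dist ((xn \<circ> r) n) x0" using xn by (auto simp: not_less)
      qed simp
      ultimately show False using d by simp
    qed
    then obtain r0 where r0: "r0 > 0" "\<And>M x. dist M M0 < r0 \<Longrightarrow> M > a \<Longrightarrow> x \<in> P M \<Longrightarrow> dist x x0 < d" by blast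
    define r where "r = min r0 (min e (M0 - a))"
    have "r > 0" using r0 e M0 by (simp add: r_def)
    moreover have "ball M0 r \<subseteq> T"
    proof
      fix M assume M: "M \<in> ball M0 r"
      then have "M > a" "dist M M0 < r0" "M \<in> ball M0 e"
        by (auto simp: r_def dist_real_def)
      then have "\<forall>x\<in>P M. x = b M" using r0(2) bu by blast
      then have "\<forall>x\<in>P M. \<forall>y\<in>P M. x = y"
      proof (intro ballI)
        fix x y assume h: "\<forall>x\<in>P M. x = b M" "x \<in> P M" "y \<in> P M"
        have "x = b M" using h(1) h(2) by (rule bspec)
        moreover have "y = b M" using h(1) h(3) by (rule bspec)
        ultimately show "x = y" by simp
      qed
      then show "M \<in> T" unfolding T_def using \<open>M > a\<close> by simp
    qed
    ultimately show ?thesis by (auto simp: mem_interior)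
  qed
  have open2: "M0 \<in> interior (- T)" if M0a: "M0 > a" and M0T: "M0 \<notin> T" for M0
  proof -
    have "\<exists>x0 x1. x0 \<in> P M0 \<and> x1 \<in> P M0 \<and> x0 \<noteq> x1" using M0a M0T by (auto simp: T_def)
    then obtain x0 x1 where x01: "x0 \<in> P M0" "x1 \<in> P M0" "x0 \<noteq> x1" by blast
    obtain e0 d0 b0 where e0: "e0 > 0" and c0: "continuous_on (ball M0 e0) b0" and b00: "b0 M0 = x0"
      and bP0: "\<forall>M\<in>ball M0 e0. b0 M \<in> P M"
      using loc[OF M0a x01(1)] by blast
    obtain e1 d1 b1 where e1: "e1 > 0" and c1: "continuous_on (ball M0 e1) b1" and b11: "b1 M0 = x1"
      and bP1: "\<forall>M\<in>ball M0 e1. b1 M \<in> P M"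
      using loc[OF M0a x01(2)] by blast
    define e where "e = min e0 e1"
    have "continuous_on (ball M0 e) (\<lambda>M. dist (b0 M) (b1 M))"
      using c0 c1 by (auto simp: e_def intro!: continuous_intros elim: continuous_on_subset)
    then have "isCont (\<lambda>M. dist (b0 M) (b1 M)) M0"
      using e0 e1 by (simp add: continuous_on_eq_continuous_at e_def)
    moreover have "dist (b0 M0) (b1 M0) \<noteq> 0" using b00 b11 x01 by simp
    ultimately obtain r where r: "r > 0" "\<And>M. dist M0 M < r \<Longrightarrow> dist (b0 M) (b1 M) \<noteq> 0"
      using continuous_at_avoid[of M0 "\<lambda>M. dist (b0 M) (b1 M)" 0] by blast
    have "ball M0 (min r e) \<subseteq> - T"
    proof
      fix M assume M: "M \<in> ball M0 (min r e)"
      then have "b0 M \<in> P M" "b1 M \<in> P M" "b0 M \<noteq> b1 M" using bP0 bP1 r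
        by (auto simp: e_def)
      then show "M \<in> - T" by (auto simp: T_def)
    qed
    moreover have "min r e > 0" using r e0 e1 by (simp add: e_def)
    ultimately show ?thesis unfolding mem_interior by blast
  qed
  obtain Mb where Mb: "Mb > a" "\<forall>x\<in>P Mb. \<forall>y\<in>P Mb. x = y" using big by blast
  have "interior T \<inter> {a<..} = {} \<or> interior (- T) \<inter> {a<..} = {}"
  proof (rule connectedD[OF connected_Ioi])
    show "interior T \<inter> interior (- T) \<inter> {a<..} = {}"
      using interior_subset[of T] interior_subset[of "-T"] by blast
    show "{a<..} \<subseteq> interior T \<union> interior (- T)" using open1 open2 by (auto simp: T_def)
  qed auto
  moreover have "Mb \<in> interior T \<inter> {a<..}" using open1 Mb by (auto simp: T_def)
  ultimately have "interior (- T) \<inter> {a<..} = {}" by blast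
  then have "\<forall>M>a. M \<in> T" using open2 by auto
  then show ?thesis using ne unfolding T_def by blast
qed

lemma continuation_C1:
  fixes P :: "real \<Rightarrow> 'v::real_normed_vector set" and a :: real
  assumes uniq: "\<forall>M>a. \<exists>!x. x \<in> P M"
   and loc: "\<And>M0 x0. M0 > a \<Longrightarrow> x0 \<in> P M0 \<Longrightarrow> \<exists>e>0. \<exists>b b'. (\<forall>M\<in>ball M0 e. b M \<in> P M \<and> (b has_vector_derivative b' M) (at M)) \<and> continuous_on (ball M0 e) b'"
  shows "(\<lambda>M. THE x. x \<in> P M) C1_differentiable_on {a<..}"
proof -
  define F where "F = (\<lambda>M. THE x. x \<in> P M)"
  have FP: "F M \<in> P M" if "M > a" for M using uniq that unfolding F_def by (metis theI')
  have key: "\<exists>e>0. ball M0 e \<subseteq> {a<..} \<and> (\<exists>b'. (\<forall>M\<in>ball M0 e. (F has_vector_derivative b' M) (at M)) \<and> continuous_on (ball M0 e) b')"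
    if M0: "M0 > a" for M0
  proof -
    obtain e b b' where e: "e > 0" and bP: "\<forall>M\<in>ball M0 e. b M \<in> P M \<and> (b has_vector_derivative b' M) (at M)"
      and cb: "continuous_on (ball M0 e) b'" using loc[OF M0 FP[OF M0]] by blast
    define e' where "e' = min e (M0 - a)"
    have e': "e' > 0" using e M0 by (simp add: e'_def)
    have sub: "ball M0 e' \<subseteq> {a<..}" by (auto simp: e'_def dist_real_def)
    have sub2: "ball M0 e' \<subseteq> ball M0 e" by (auto simp: e'_def)
    have Fb: "F M = b M" if "M \<in> ball M0 e'" for M
      using uniq FP[of M] bP sub sub2 that by blast
    have "\<forall>M\<in>ball M0 e'. (F has_vector_derivative b' M) (at M)"
    proof
      fix M assume M: "M \<in> ball M0 e'"
      show "(F has_vector_derivative b' M) (at M)"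
        by (rule has_vector_derivative_transform_within_open[of b _ _ "ball M0 e'"])
           (use bP sub2 M Fb in auto)
    qed
    then show ?thesis using e' sub cb sub2 by (meson continuous_on_subset)
  qed
  define D where "D = (\<lambda>M. vector_derivative F (at M))"
  have hasD: "(F has_vector_derivative D M) (at M)" if "M > a" for M
    using key[OF that] unfolding D_def
    by (metis centre_in_ball vector_derivative_works differentiableI_vector)
  have "isCont D M0" if M0: "M0 > a" for M0
  proof -
    obtain e b' where e: "e > 0" and sub: "ball M0 e \<subseteq> {a<..}"
      and hb: "\<forall>M\<in>ball M0 e. (F has_vector_derivative b' M) (at M)" and cb: "continuous_on (ball M0 e) b'"
      using key[OF M0] by blast
    have "\<forall>M\<in>ball M0 e. D M = b' M" using hb unfolding D_def by (simp add: vector_derivative_at)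
    then have "continuous_on (ball M0 e) D" using cb continuous_on_eq by metis
    then show ?thesis using e by (simp add: continuous_on_eq_continuous_at)
  qed
  then have "continuous_on {a<..} D" by (simp add: continuous_at_imp_continuous_on)
  then show ?thesis unfolding C1_differentiable_on_def F_def[symmetric] using hasD by auto
qed




lemma has_derivative_vec_lambda:
  fixes g :: "'s::finite \<Rightarrow> 'a::real_normed_vector \<Rightarrow> real"
  assumes "\<And>i. (g i has_derivative g' i) (at a within S)"
  shows "((\<lambda>x. \<chi> i. g i x) has_derivative (\<lambda>h. \<chi> i. g' i h)) (at a within S)"
  apply (subst has_derivative_componentwise_within)
  using assms by (auto simp: Basis_vec_def inner_axis)

lemma cont_inv_apply:
  fixes A :: "real \<Rightarrow> 'a::euclidean_space \<Rightarrow>\<^sub>L 'a"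
  assumes cA: "continuous_on S A" and oS: "open S" and bA: "\<And>M. M\<in>S \<Longrightarrow> bij (blinfun_apply (A M))"
  shows "continuous_on S (\<lambda>M. inv (blinfun_apply (A M)) w)"
proof -
  have "isCont (\<lambda>M. inv (blinfun_apply (A M)) w) M1" if M1: "M1 \<in> S" for M1
  proof -
    define u where "u = (\<lambda>M. inv (blinfun_apply (A M)) w)"
    have Au: "blinfun_apply (A M) (u M) = w" if "M \<in> S" for M
      using bA[OF that] unfolding u_def by (meson bij_inv_eq_iff)
    have lin: "linear (blinfun_apply (A M1))" by (simp add: blinfun.bounded_linear_right bounded_linear.linear)
    have "inj (blinfun_apply (A M1))" using bA[OF M1] by (simp add: bij_is_inj)
    then obtain k where k: "k > 0" "\<And>x. k * norm x \<le> norm (blinfun_apply (A M1) x)"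
      using linear_inj_bounded_below_pos[OF lin] by blast
    have tA: "(A \<longlongrightarrow> A M1) (at M1)" using cA oS M1 by (simp add: continuous_on_eq_continuous_at isCont_def)
    have ev1: "\<forall>\<^sub>F M in at M1. dist (A M) (A M1) < k/2" using tendstoD[OF tA, of "k/2"] k(1) by simp
    have ev2: "\<forall>\<^sub>F M in at M1. M \<in> S" using oS M1 by (simp add: eventually_at_topological) (metis)
    have ev: "\<forall>\<^sub>F M in at M1. norm (u M - u M1) \<le> norm (A M - A M1) * (2 / k * norm (u M1))"
      using ev1 ev2
    proof eventually_elim
      case (elim M)
      let ?h = "u M - u M1"
      have "blinfun_apply (A M) ?h = blinfun_apply (A M1) (u M1) - blinfun_apply (A M) (u M1)"
        using Au elim M1 by (simp add: blinfun.diff_right)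
      also have "\<dots> = - blinfun_apply (A M - A M1) (u M1)" by (simp add: blinfun.diff_left)
      finally have eq: "norm (blinfun_apply (A M) ?h) \<le> norm (A M - A M1) * norm (u M1)"
        by (simp add: norm_blinfun)
      have "norm (blinfun_apply (A M) ?h) \<ge> k/2 * norm ?h"
      proof -
        have "blinfun_apply (A M) ?h = blinfun_apply (A M1) ?h + blinfun_apply (A M - A M1) ?h"
          by (simp add: blinfun.diff_left)
        then have "norm (blinfun_apply (A M) ?h) \<ge> norm (blinfun_apply (A M1) ?h) - norm (blinfun_apply (A M - A M1) ?h)"
          by (metis norm_diff_ineq add_diff_cancel_right' norm_triangle_ineq2 order_trans)
        moreover have "norm (blinfun_apply (A M - A M1) ?h) \<le> norm (A M - A M1) * norm ?h" by (simp add: norm_blinfun)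
        moreover have "norm (A M - A M1) * norm ?h \<le> k/2 * norm ?h"
          using elim(1) by (intro mult_right_mono) (auto simp: dist_norm)
        ultimately show ?thesis using k(2)[of ?h] by linarith
      qed
      with eq have "k/2 * norm ?h \<le> norm (A M - A M1) * norm (u M1)" by linarith
      then show ?case using k(1) by (simp add: field_simps)
    qed
    have lim: "((\<lambda>M. A M - A M1) \<longlongrightarrow> 0) (at M1)" using LIM_zero[OF tA] .
    have "((\<lambda>M. u M - u M1) \<longlongrightarrow> 0) (at M1)" using tendsto_0_le[OF lim ev] .
    then show ?thesis unfolding u_def[symmetric] isCont_def by (simp add: LIM_zero_iff)
  qed
  then show ?thesis by (simp add: continuous_at_imp_continuous_on)
qed




lemma has_derivative_vec_nth'[derivative_intros]:
  "(g has_derivative g') F \<Longrightarrow> ((\<lambda>x. g x $ i) has_derivative (\<lambda>h. g' h $ i)) F"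
  by (rule bounded_linear.has_derivative[OF bounded_linear_vec_nth])

locale RM =
  fixes pop :: "'s::{finite,linorder} \<Rightarrow> 'i"
    and f :: "'s \<Rightarrow> (real,'s) vec \<Rightarrow> real"
    and f' :: "'s \<Rightarrow> (real,'s) vec \<Rightarrow> (real,'s) vec \<Rightarrow>\<^sub>L real"
    and U :: "((real,'s) vec) set"
    and c :: "(real,'s) vec"
  assumes surj: "surj pop" and oU: "open U" and sU: "pop_simplex pop \<subseteq> U"
    and der: "\<And>s x. x \<in> U \<Longrightarrow> (f s has_derivative blinfun_apply (f' s x)) (at x)"
    and cf': "\<And>s. continuous_on U (f' s)"
    and cint: "c \<in> int_simplex pop"
begin

abbreviation "D \<equiv> pop_simplex pop"
abbreviation "PS i \<equiv> {t. pop t = i}"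

lemma finPS[simp]: "finite (PS i)" by simp

lemma last_in: "pop (last_type pop i) = i"
proof -
  obtain s where "i = pop s" using surj by (rule surjE)
  then have "PS i \<noteq> {}" by blast
  then have "last_type pop i \<in> PS i" unfolding last_type_def by (intro Max_in) auto
  then show ?thesis by simp
qed

lemma dropped_last: "dropped pop (last_type pop i)"
  unfolding dropped_def using last_in by simp

lemma dropped_unique: "dropped pop s \<Longrightarrow> dropped pop t \<Longrightarrow> pop s = pop t \<Longrightarrow> s = t"
  unfolding dropped_def by simp

lemma D_nonneg: "x \<in> D \<Longrightarrow> 0 \<le> x$s" by (simp add: pop_simplex_def)
lemma D_sum: "x \<in> D \<Longrightarrow> (\<Sum>t\<in>PS i. x$t) = 1" by (simp add: pop_simplex_def)
lemma D_le1: assumes "x \<in> D" shows "x$s \<le> 1"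
proof -
  have "x$s \<le> (\<Sum>t\<in>PS (pop s). x$t)"
    by (rule member_le_sum) (use D_nonneg[OF assms] in auto)
  then show ?thesis using D_sum[OF assms] by simp
qed

lemma c_D: "c \<in> D" and c_pos: "0 < c$s" using cint by (auto simp: int_simplex_def)

lemma D_closed: "closed D"
  unfolding pop_simplex_def
  by (intro closed_Collect_conj closed_Collect_all closed_Collect_le closed_Collect_eq continuous_intros)

lemma D_bounded: "bounded D"
proof -
  have "norm x \<le> real CARD('s)" if "x \<in> D" for x
  proof -
    have "norm x \<le> (\<Sum>i\<in>UNIV. \<bar>x$i\<bar>)" by (rule norm_le_l1_cart)
    also have "\<dots> \<le> (\<Sum>i\<in>(UNIV::'s set). 1)"
      by (intro sum_mono) (use D_nonneg[OF that] D_le1[OF that] in auto)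
    finally show ?thesis by simp
  qed
  then show ?thesis unfolding bounded_iff by blast
qed

lemma D_compact: "compact D" using D_closed D_bounded by (simp add: compact_eq_bounded_closed)

lemma D_convex: "convex D"
  unfolding convex_def
proof (intro ballI allI impI)
  fix x y :: "(real,'s) vec" and u v :: real
  assume xy: "x \<in> D" "y \<in> D" and uv: "0 \<le> u" "0 \<le> v" "u + v = 1"
  have "0 \<le> (u *\<^sub>R x + v *\<^sub>R y) $ s" for s
    using D_nonneg[OF xy(1)] D_nonneg[OF xy(2)] uv by simp
  moreover have "(\<Sum>t\<in>PS i. (u *\<^sub>R x + v *\<^sub>R y) $ t) = 1" for i
    using D_sum[OF xy(1)] D_sum[OF xy(2)] uv by (simp add: sum.distrib sum_distrib_left[symmetric])
  ultimately show "u *\<^sub>R x + v *\<^sub>R y \<in> D" by (simp add: pop_simplex_def)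
qed

lemma D_ne: "D \<noteq> {}" using c_D by blast

lemma cont_f: "continuous_on U (f s)"
  using der by (intro has_derivative_continuous_on) (auto intro: has_derivative_at_withinI)

lemma cont_repl: "continuous_on U (repl pop f)"
  unfolding repl_def fbar_def
  by (intro continuous_on_vec_lambda continuous_intros continuous_on_compose2[OF cont_f]) auto

lemma repl_sum: assumes "(\<Sum>t\<in>PS i. x$t) = 1" shows "(\<Sum>t\<in>PS i. repl pop f x $ t) = 0"
proof -
  have "(\<Sum>t\<in>PS i. repl pop f x $ t) = (\<Sum>t\<in>PS i. x$t * f t x) - (\<Sum>t\<in>PS i. x$t) * fbar pop f i x"
    by (simp add: repl_def right_diff_distrib sum_subtractf sum_distrib_right)
  also have "\<dots> = 0" using assms by (simp add: fbar_def)
  finally show ?thesis .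
qed

definition R' :: "(real,'s) vec \<Rightarrow> (real,'s) vec \<Rightarrow> (real,'s) vec" where
  "R' y h = (\<chi> s. h$s * (f s y - fbar pop f (pop s) y) +
       y$s * (blinfun_apply (f' s y) h - (\<Sum>t\<in>PS (pop s). h$t * f t y + y$t * blinfun_apply (f' t y) h)))"

lemma der_repl: assumes y: "y \<in> U" shows "(repl pop f has_derivative R' y) (at y)"
proof -
  have "((\<lambda>x. x $ s * (f s x - fbar pop f (pop s) x)) has_derivative (\<lambda>h. R' y h $ s)) (at y)" for s
  proof -
    have d1: "((\<lambda>x. x$t * f t x) has_derivative (\<lambda>h. h$t * f t y + y$t * blinfun_apply (f' t y) h)) (at y)" for t
      using has_derivative_mult[OF has_derivative_vec_nth'[OF has_derivative_ident] der[OF y, of t]]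
      by (simp add: algebra_simps)
    have "((\<lambda>x. fbar pop f (pop s) x) has_derivative (\<lambda>h. \<Sum>t\<in>PS (pop s). h$t * f t y + y$t * blinfun_apply (f' t y) h)) (at y)"
      unfolding fbar_def by (rule has_derivative_sum) (use d1 in auto)
    from has_derivative_mult[OF has_derivative_vec_nth'[OF has_derivative_ident, where i=s] has_derivative_diff[OF der[OF y, of s] this]]
    show ?thesis by (simp add: R'_def algebra_simps)
  qed
  then have "((\<lambda>x. \<chi> s. x $ s * (f s x - fbar pop f (pop s) x)) has_derivative (\<lambda>h. \<chi> s. R' y h $ s)) (at y)"
    by (rule has_derivative_vec_lambda)
  then show ?thesis unfolding repl_def by simp
qed

lemma cont_R': "continuous_on U (\<lambda>y. R' y h)"
proof -
  have cf'h: "continuous_on U (\<lambda>y. blinfun_apply (f' s y) h)" for s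
    using cf' by (intro continuous_intros) auto
  show ?thesis unfolding R'_def fbar_def
    by (intro continuous_on_vec_lambda continuous_intros cf'h cont_f)
qed

end



lemma fin_bound:
  fixes g :: "'s::finite \<Rightarrow> 'a \<Rightarrow> real"
  assumes "\<And>s. \<exists>B. \<forall>x\<in>S. g s x \<le> B"
  shows "\<exists>B\<ge>0. \<forall>s. \<forall>x\<in>S. g s x \<le> B"
proof -
  obtain Bs where Bs: "\<And>s. \<forall>x\<in>S. g s x \<le> Bs s" using assms by metis
  define B where "B = max 0 (Max (range Bs))"
  have "Bs s \<le> B" for s unfolding B_def by (rule max.coboundedI2, rule Max_ge) auto
  then show ?thesis using Bs by (metis B_def max.cobounded1 order_trans)
qed

lemma abs2: "\<bar>(a::real)*b + c*d\<bar> \<le> \<bar>a\<bar>*\<bar>b\<bar> + \<bar>c\<bar>*\<bar>d\<bar>"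
  by (simp only: abs_mult[symmetric] abs_triangle_ineq)

context RM begin

definition "P M = {x \<in> D. repl_mut pop f M c x = 0}"

lemma cont_bound:
  assumes "continuous_on D g" shows "\<exists>B. \<forall>x\<in>D. norm (g x) \<le> B"
proof -
  have "bounded (g ` D)" using compact_continuous_image[OF assms D_compact] by (rule compact_imp_bounded)
  then show ?thesis unfolding bounded_iff by blast
qed

lemma f_bnd: obtains F0 where "F0 \<ge> 0" "\<And>s x. x \<in> D \<Longrightarrow> \<bar>f s x\<bar> \<le> F0"
proof -
  have "\<exists>B. \<forall>x\<in>D. \<bar>f s x\<bar> \<le> B" for s
    using cont_bound[OF continuous_on_subset[OF cont_f sU]] by simp
  from fin_bound[of D "\<lambda>s x. \<bar>f s x\<bar>", OF this] show ?thesis using that by blast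
qed

lemma f'_bnd: obtains B where "B \<ge> 0" "\<And>s x. x \<in> D \<Longrightarrow> norm (f' s x) \<le> B"
proof -
  have "\<exists>B. \<forall>x\<in>D. norm (f' s x) \<le> B" for s
    using cont_bound[OF continuous_on_subset[OF cf' sU]] by simp
  from fin_bound[of D "\<lambda>s x. norm (f' s x)", OF this] show ?thesis using that by blast
qed

lemma f_lip:
  assumes B: "\<And>s x. x \<in> D \<Longrightarrow> norm (f' s x) \<le> B" and x: "x \<in> D" and y: "y \<in> D"
  shows "\<bar>f s x - f s y\<bar> \<le> B * norm (x - y)"
proof -
  have "norm (f s x - f s y) \<le> B * norm (x - y)"
  proof (rule differentiable_bound[OF D_convex _ _ x y])
    show "(f s has_derivative blinfun_apply (f' s z)) (at z within D)" if "z \<in> D" for z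
      using der[of z s] sU that by (auto intro: has_derivative_at_withinI)
    show "onorm (blinfun_apply (f' s z)) \<le> B" if "z \<in> D" for z
      using B[OF that] by (simp add: norm_blinfun.rep_eq)
  qed
  then show ?thesis by simp
qed

lemma comp_le: "\<bar>x$s - y$s\<bar> \<le> norm (x - y)"
  using component_le_norm_cart[of "x - y" s] by simp

lemma repl_lip: obtains L where "L \<ge> 0" "\<And>x y. x \<in> D \<Longrightarrow> y \<in> D \<Longrightarrow> norm (repl pop f x - repl pop f y) \<le> L * norm (x - y)"
proof -
  obtain F0 where F0: "F0 \<ge> 0" "\<And>s x. x \<in> D \<Longrightarrow> \<bar>f s x\<bar> \<le> F0" using f_bnd by blast
  obtain B where B: "B \<ge> 0" "\<And>s x. x \<in> D \<Longrightarrow> norm (f' s x) \<le> B" using f'_bnd by blast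
  define n where "n = real CARD('s)"
  have n0: "n \<ge> 0" by (simp add: n_def)
  have fl: "\<bar>f s x - f s y\<bar> \<le> B * norm (x - y)" if "x \<in> D" "y \<in> D" for s x y
    using f_lip[OF B(2) that] .
  have fbarb: "\<bar>fbar pop f i x\<bar> \<le> F0" if x: "x \<in> D" for i x
  proof -
    have "\<bar>fbar pop f i x\<bar> \<le> (\<Sum>t\<in>PS i. \<bar>x$t * f t x\<bar>)" unfolding fbar_def by (rule sum_abs)
    also have "\<dots> \<le> (\<Sum>t\<in>PS i. x$t * F0)"
      by (intro sum_mono) (use D_nonneg[OF x] F0(2)[OF x] in \<open>auto simp: abs_mult intro: mult_left_mono\<close>)
    also have "\<dots> = F0" using D_sum[OF x] by (simp add: sum_distrib_right[symmetric])
    finally show ?thesis .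
  qed
  have fbarl: "\<bar>fbar pop f i x - fbar pop f i y\<bar> \<le> n * (F0 + B) * norm (x - y)" if x: "x \<in> D" and y: "y \<in> D" for i x y
  proof -
    have t: "\<bar>x$t * f t x - y$t * f t y\<bar> \<le> (F0 + B) * norm (x - y)" for t
    proof -
      have "x$t * f t x - y$t * f t y = (x$t - y$t) * f t x + y$t * (f t x - f t y)" by (simp add: algebra_simps)
      then have "\<bar>x$t * f t x - y$t * f t y\<bar> \<le> \<bar>x$t - y$t\<bar> * \<bar>f t x\<bar> + \<bar>y$t\<bar> * \<bar>f t x - f t y\<bar>"
        by (simp only: abs2)
      also have "\<dots> \<le> norm (x - y) * F0 + 1 * (B * norm (x - y))"
        using D_nonneg[OF y, of t] D_le1[OF y, of t]
        by (intro add_mono mult_mono comp_le F0(2)[OF x] fl[OF x y]) auto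
      finally show ?thesis by (simp add: algebra_simps)
    qed
    have "\<bar>fbar pop f i x - fbar pop f i y\<bar> = \<bar>\<Sum>t\<in>PS i. x$t * f t x - y$t * f t y\<bar>"
      by (simp add: fbar_def sum_subtractf)
    also have "\<dots> \<le> (\<Sum>t\<in>PS i. \<bar>x$t * f t x - y$t * f t y\<bar>)" by (rule sum_abs)
    also have "\<dots> \<le> (\<Sum>t\<in>PS i. (F0 + B) * norm (x - y))" by (intro sum_mono t)
    also have "\<dots> = real (card (PS i)) * ((F0 + B) * norm (x - y))" by simp
    also have "\<dots> \<le> n * ((F0 + B) * norm (x - y))"
      unfolding n_def using F0(1) B(1) by (intro mult_right_mono) (auto simp: card_mono)
    finally show ?thesis by (simp add: algebra_simps)
  qed
  define L1 where "L1 = 2 * F0 + (B + n * (F0 + B))"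
  have L10: "L1 \<ge> 0" using F0 B n0 by (simp add: L1_def)
  have comp: "\<bar>repl pop f x $ s - repl pop f y $ s\<bar> \<le> L1 * norm (x - y)" if x: "x \<in> D" and y: "y \<in> D" for s x y
  proof -
    define g where "g = (\<lambda>z. f s z - fbar pop f (pop s) z)"
    have gb: "\<bar>g x\<bar> \<le> 2 * F0" using F0(2)[OF x, of s] fbarb[OF x, of "pop s"] by (simp add: g_def)
    have gl: "\<bar>g x - g y\<bar> \<le> (B + n * (F0 + B)) * norm (x - y)"
    proof -
      have "\<bar>g x - g y\<bar> \<le> \<bar>f s x - f s y\<bar> + \<bar>fbar pop f (pop s) x - fbar pop f (pop s) y\<bar>"
        unfolding g_def by linarith
      also have "\<dots> \<le> B * norm (x - y) + n * (F0 + B) * norm (x - y)"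
        by (intro add_mono fl[OF x y] fbarl[OF x y])
      finally show ?thesis by (simp add: algebra_simps)
    qed
    have "repl pop f x $ s - repl pop f y $ s = (x$s - y$s) * g x + y$s * (g x - g y)"
      by (simp add: repl_def g_def algebra_simps)
    then have "\<bar>repl pop f x $ s - repl pop f y $ s\<bar> \<le> \<bar>x$s - y$s\<bar> * \<bar>g x\<bar> + \<bar>y$s\<bar> * \<bar>g x - g y\<bar>"
      by (simp only: abs2)
    also have "\<dots> \<le> norm (x - y) * (2 * F0) + 1 * ((B + n * (F0 + B)) * norm (x - y))"
      using D_nonneg[OF y, of s] D_le1[OF y, of s]
      by (intro add_mono mult_mono comp_le gb gl) auto
    finally show ?thesis by (simp add: L1_def algebra_simps)
  qed
  show ?thesis
  proof (rule that[of "n * L1"])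
    show "n * L1 \<ge> 0" using n0 L10 by simp
    fix x y assume x: "x \<in> D" and y: "y \<in> D"
    have "norm (repl pop f x - repl pop f y) \<le> (\<Sum>s\<in>UNIV. \<bar>(repl pop f x - repl pop f y) $ s\<bar>)"
      by (rule norm_le_l1_cart)
    also have "\<dots> \<le> (\<Sum>s\<in>(UNIV::'s set). L1 * norm (x - y))" by (intro sum_mono) (simp add: comp[OF x y])
    also have "\<dots> = n * L1 * norm (x - y)" by (simp add: n_def)
    finally show "norm (repl pop f x - repl pop f y) \<le> n * L1 * norm (x - y)" .
  qed
qed

lemma big_unique: "\<exists>L. \<forall>M>L. \<forall>x\<in>P M. \<forall>y\<in>P M. x = y"
proof -
  obtain L where L: "L \<ge> 0" "\<And>x y. x \<in> D \<Longrightarrow> y \<in> D \<Longrightarrow> norm (repl pop f x - repl pop f y) \<le> L * norm (x - y)"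
    using repl_lip by blast
  have "x = y" if M: "M > L" and x: "x \<in> P M" and y: "y \<in> P M" for M x y
  proof -
    have xD: "x \<in> D" and yD: "y \<in> D" and ex: "repl pop f x + M *\<^sub>R (c - x) = 0" and ey: "repl pop f y + M *\<^sub>R (c - y) = 0"
      using x y by (auto simp: P_def repl_mut_def)
    have rx: "repl pop f x = M *\<^sub>R (x - c)" using ex by (simp add: eq_neg_iff_add_eq_0[symmetric] scaleR_diff_right)
    have ry: "repl pop f y = M *\<^sub>R (y - c)" using ey by (simp add: eq_neg_iff_add_eq_0[symmetric] scaleR_diff_right)
    have "repl pop f x - repl pop f y = M *\<^sub>R (x - y)" unfolding rx ry by (simp add: scaleR_diff_right)
    then have "M * norm (x - y) \<le> L * norm (x - y)" using L(2)[OF xD yD] M L(1) by simp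
    then have "(M - L) * norm (x - y) \<le> 0" by (simp add: left_diff_distrib)
    then have "norm (x - y) \<le> 0" using M by (simp add: mult_le_0_iff)
    then show ?thesis by simp
  qed
  then show ?thesis by blast
qed

end



context RM begin

lemma cont_fbar: "continuous_on U (fbar pop f i)"
  unfolding fbar_def by (intro continuous_intros cont_f)

lemma exists_eq: assumes M: "M > 0" shows "P M \<noteq> {}"
proof -
  obtain F0 where F0: "F0 \<ge> 0" "\<And>s x. x \<in> D \<Longrightarrow> \<bar>f s x\<bar> \<le> F0" using f_bnd by blast
  define K where "K = F0 + 1"
  have fbarb: "\<bar>fbar pop f i x\<bar> \<le> F0" if x: "x \<in> D" for i x
  proof -
    have "\<bar>fbar pop f i x\<bar> \<le> (\<Sum>t\<in>PS i. \<bar>x$t * f t x\<bar>)" unfolding fbar_def by (rule sum_abs)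
    also have "\<dots> \<le> (\<Sum>t\<in>PS i. x$t * F0)"
      by (intro sum_mono) (use D_nonneg[OF x] F0(2)[OF x] in \<open>auto simp: abs_mult intro: mult_left_mono\<close>)
    also have "\<dots> = F0" using D_sum[OF x] by (simp add: sum_distrib_right[symmetric])
    finally show ?thesis .
  qed
  define den where "den = (\<lambda>i x. fbar pop f i x + K + M)"
  define T where "T = (\<lambda>x. \<chi> s. (x$s * (f s x + K) + M * c$s) / den (pop s) x)"
  have denpos: "den i x > 0" if "x \<in> D" for i x
    using fbarb[OF that, of i] M by (simp add: den_def K_def)
  have dnz: "\<forall>x\<in>D. fbar pop f i x + K + M \<noteq> 0" for i using denpos unfolding den_def by (metis less_irrefl)
  have contT: "continuous_on D T"
    unfolding T_def den_def
    by (intro continuous_on_vec_lambda continuous_intros continuous_on_subset[OF cont_f sU]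
        continuous_on_subset[OF cont_fbar sU]) (use dnz in auto)
  have TD: "T x \<in> D" if x: "x \<in> D" for x
  proof -
    have num: "x$s * (f s x + K) + M * c$s \<ge> 0" for s
    proof -
      have "f s x + K \<ge> 0" using F0(2)[OF x, of s] by (simp add: K_def abs_le_iff)
      then show ?thesis using D_nonneg[OF x, of s] c_pos[of s] M by simp
    qed
    have "0 \<le> T x $ s" for s using num[of s] denpos[OF x, of "pop s"] by (simp add: T_def)
    moreover have "(\<Sum>t\<in>PS i. T x $ t) = 1" for i
    proof -
      have "(\<Sum>t\<in>PS i. T x $ t) = (\<Sum>t\<in>PS i. (x$t * (f t x + K) + M * c$t) / den i x)"
        by (rule sum.cong) (auto simp: T_def)
      also have "\<dots> = (\<Sum>t\<in>PS i. x$t * f t x + K * x$t + M * c$t) / den i x"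
        by (simp add: sum_divide_distrib algebra_simps)
      also have "(\<Sum>t\<in>PS i. x$t * f t x + K * x$t + M * c$t) = fbar pop f i x + K * (\<Sum>t\<in>PS i. x$t) + M * (\<Sum>t\<in>PS i. c$t)"
        by (simp add: sum.distrib fbar_def sum_distrib_left)
      also have "\<dots> = den i x" using D_sum[OF x, of i] D_sum[OF c_D, of i] by (simp add: den_def)
      finally show ?thesis using denpos[OF x, of i] by simp
    qed
    ultimately show ?thesis by (simp add: pop_simplex_def)
  qed
  have TDf: "T \<in> D \<rightarrow> D" using TD by blast
  obtain x where x: "x \<in> D" "T x = x"
    by (rule brouwer[OF D_compact D_convex D_ne contT TDf])
  have "repl_mut pop f M c x $ s = 0" for s
  proof -
    have "x$s = (x$s * (f s x + K) + M * c$s) / den (pop s) x" 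
    proof -
      have "x$s = T x $ s" using x(2) by simp
      then show ?thesis by (simp add: T_def)
    qed
    then have "x$s * den (pop s) x = x$s * (f s x + K) + M * c$s" using denpos[OF x(1), of "pop s"] by (simp add: field_simps)
    then show ?thesis by (simp add: repl_mut_def repl_def den_def algebra_simps)
  qed
  then have "repl_mut pop f M c x = 0" by (simp add: vec_eq_iff)
  then show ?thesis using x(1) by (auto simp: P_def)
qed

lemma P_pos: assumes M: "M > 0" and x: "x \<in> P M" shows "x$s > 0"
proof -
  have "x$s \<ge> 0" using x D_nonneg by (auto simp: P_def)
  moreover have "x$s \<noteq> 0"
  proof
    assume "x$s = 0"
    moreover have "repl_mut pop f M c x $ s = 0" using x by (simp add: P_def)
    ultimately have "M * c$s = 0" by (simp add: repl_mut_def repl_def)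
    then show False using M c_pos[of s] by simp
  qed
  ultimately show ?thesis by simp
qed

lemma P_closed:
  assumes "\<And>n. xn n \<in> P (Mn n)" "Mn \<longlonglongrightarrow> M" "xn \<longlonglongrightarrow> x"
  shows "x \<in> P M"
proof -
  have xnD: "\<And>n. xn n \<in> D" using assms(1) by (simp add: P_def)
  have xD: "x \<in> D" using D_closed assms(3) xnD closed_sequentially by blast
  have "((\<lambda>n. repl pop f (xn n)) \<longlongrightarrow> repl pop f x) sequentially"
    by (rule continuous_on_tendsto_compose[OF continuous_on_subset[OF cont_repl sU] assms(3) xD]) (simp add: xnD)
  then have "((\<lambda>n. repl_mut pop f (Mn n) c (xn n)) \<longlongrightarrow> repl_mut pop f M c x) sequentially"
    unfolding repl_mut_def using assms(2,3) by (intro tendsto_intros)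
  moreover have "(\<lambda>n. repl_mut pop f (Mn n) c (xn n)) = (\<lambda>n. 0)" using assms(1) by (simp add: P_def)
  ultimately have "repl_mut pop f M c x = 0" by (metis LIMSEQ_unique tendsto_const)
  then show ?thesis using xD by (simp add: P_def)
qed

end



context RM begin

definition Elin :: "(real,'s) vec \<Rightarrow> (real,'s) vec" where
  "Elin h = (\<chi> s. if dropped pop s then - (\<Sum>t\<in>{t. pop t = pop s \<and> t \<noteq> s}. h$t) else h$s)"

definition DRed :: "(real,'s) vec \<Rightarrow> (real,'s) vec \<Rightarrow> (real,'s) vec" where
  "DRed x h = (\<chi> s. if dropped pop s then 0 else R' x (Elin h) $ s)"

lemma embed_D: assumes x: "x \<in> D" shows "embed pop x = x"
proof -
  have "embed pop x $ s = x $ s" for s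
  proof (cases "dropped pop s")
    case True
    have "(\<Sum>t\<in>PS (pop s). x$t) = x$s + (\<Sum>t\<in>PS (pop s) - {s}. x$t)"
      by (rule sum.remove) auto
    moreover have "PS (pop s) - {s} = {t. pop t = pop s \<and> t \<noteq> s}" by auto
    ultimately show ?thesis using True D_sum[OF x, of "pop s"] by (simp add: embed_def)
  qed (simp add: embed_def)
  then show ?thesis by (simp add: vec_eq_iff)
qed

lemma der_embed: "(embed pop has_derivative Elin) (at x)"
proof -
  have "((\<lambda>y. embed pop y $ s) has_derivative (\<lambda>h. Elin h $ s)) (at x)" for s
  proof (cases "dropped pop s")
    case True
    have "((\<lambda>y. 1 - (\<Sum>t\<in>{t. pop t = pop s \<and> t \<noteq> s}. y$t)) has_derivative (\<lambda>h. 0 - (\<Sum>t\<in>{t. pop t = pop s \<and> t \<noteq> s}. h$t))) (at x)"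
      by (intro has_derivative_diff has_derivative_const has_derivative_sum has_derivative_vec_nth'[OF has_derivative_ident])
    then show ?thesis using True by (simp add: embed_def Elin_def)
  next
    case False
    then show ?thesis using has_derivative_vec_nth'[OF has_derivative_ident, where F="at x" and i=s]
      by (simp add: embed_def Elin_def)
  qed
  from has_derivative_vec_lambda[of "\<lambda>s y. embed pop y $ s" "\<lambda>s h. Elin h $ s", OF this] show ?thesis by (simp add: vec_lambda_eta)
qed

lemma der_reduced: assumes x: "x \<in> D" shows "(reduced pop f has_derivative DRed x) (at x)"
proof -
  have c: "((\<lambda>y. repl pop f (embed pop y)) has_derivative (\<lambda>h. R' x (Elin h))) (at x)"
    using has_derivative_compose[OF der_embed, of "repl pop f" "R' x"] der_repl[of x] embed_D[OF x] sU x
    by auto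
  have "((\<lambda>y. if dropped pop s then 0 else repl pop f (embed pop y) $ s) has_derivative (\<lambda>h. DRed x h $ s)) (at x)" for s
    using has_derivative_vec_nth'[OF c, of s] by (cases "dropped pop s") (auto simp: DRed_def)
  from has_derivative_vec_lambda[of "\<lambda>s y. if dropped pop s then 0 else repl pop f (embed pop y) $ s" "\<lambda>s h. DRed x h $ s", OF this]
  show ?thesis by (simp add: reduced_def[abs_def] vec_lambda_eta)
qed

lemma fd: assumes x: "x \<in> D" shows "frechet_derivative (reduced pop f) (at x) = DRed x"
    using frechet_derivative_at[OF der_reduced[OF x]] by simp

lemma jac: assumes x: "x \<in> D" shows "reduced_jacobian pop f x *v v = DRed x v"
proof -
  have "frechet_derivative (reduced pop f) (at x) = DRed x" using fd[OF x] .
  moreover have "linear (DRed x)" using der_reduced[OF x] by (rule has_derivative_linear)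
  ultimately show ?thesis unfolding reduced_jacobian_def by (simp add: matrix_works linear_linear)
qed

definition "Eset = {Re lam | lam x. x \<in> D \<and> reduced_eigenvalue pop f x lam}"

lemma Mlow_eq: "Mlow pop f = (if Eset = {} then 0 else max 0 (Sup Eset))"
  unfolding Mlow_def Eset_def Let_def ..

lemma Mlow_nonneg: "Mlow pop f \<ge> 0" by (simp add: Mlow_eq)

lemma Eset_bdd: "bdd_above Eset"
proof -
  define g where "g = (\<lambda>x. \<Sum>i\<in>UNIV. \<Sum>j\<in>UNIV. \<bar>R' x (Elin (axis j 1)) $ i\<bar>)"
  have "continuous_on U g" unfolding g_def by (intro continuous_intros cont_R')
  then obtain G where G: "\<And>x. x \<in> D \<Longrightarrow> norm (g x) \<le> G" using cont_bound[OF continuous_on_subset[OF _ sU]] by blast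
  have "Re lam \<le> G" if x: "x \<in> D" and ev: "reduced_eigenvalue pop f x lam" for x lam
  proof -
    define A where "A = reduced_jacobian pop f x"
    obtain v :: "(complex,'s) vec" where v: "v \<noteq> 0" and Av: "(\<chi> i j. complex_of_real (A $ i $ j)) *v v = lam *s v"
      using ev unfolding reduced_eigenvalue_def A_def by blast
    have Aij: "A $ i $ j = DRed x (axis j 1) $ i" for i j
      unfolding A_def reduced_jacobian_def matrix_def fd[OF x] by simp
    have "\<exists>i0. \<forall>i. cmod (v$i) \<le> cmod (v$i0)"
    proof -
      have "Max (range (\<lambda>i. cmod (v$i))) \<in> range (\<lambda>i. cmod (v$i))" by (intro Max_in) auto
      then obtain i0 where "Max (range (\<lambda>i. cmod (v$i))) = cmod (v$i0)" by (rule rangeE)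
      moreover have "cmod (v$i) \<le> Max (range (\<lambda>i. cmod (v$i)))" for i by (rule Max_ge) auto
      ultimately have "cmod (v$i) \<le> cmod (v$i0)" for i by simp
      then show ?thesis by blast
    qed
    then obtain i0 where i0: "\<And>i. cmod (v$i) \<le> cmod (v$i0)" by blast
    have vi0: "cmod (v$i0) > 0"
    proof (rule ccontr)
      assume "\<not> ?thesis"
      then have "cmod (v$i) = 0" for i using i0[of i] norm_ge_zero[of "v$i"] by linarith
      then have "v = 0" by (simp add: vec_eq_iff)
      then show False using v by simp
    qed
    have "lam * v$i0 = (\<Sum>j\<in>UNIV. complex_of_real (A$i0$j) * v$j)"
      using arg_cong[OF Av, of "\<lambda>w. w $ i0"] by (simp add: matrix_vector_mult_def vector_scalar_mult_def)
    then have "cmod lam * cmod (v$i0) = cmod (\<Sum>j\<in>UNIV. complex_of_real (A$i0$j) * v$j)"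
      by (metis norm_mult)
    also have "\<dots> \<le> (\<Sum>j\<in>UNIV. cmod (complex_of_real (A$i0$j) * v$j))" by (rule norm_sum)
    also have "\<dots> = (\<Sum>j\<in>UNIV. \<bar>A$i0$j\<bar> * cmod (v$j))" by (simp add: norm_mult)
    also have "\<dots> \<le> (\<Sum>j\<in>UNIV. \<bar>A$i0$j\<bar> * cmod (v$i0))" by (intro sum_mono mult_left_mono i0) auto
    also have "\<dots> = (\<Sum>j\<in>UNIV. \<bar>A$i0$j\<bar>) * cmod (v$i0)" by (simp add: sum_distrib_right)
    finally have "cmod lam \<le> (\<Sum>j\<in>UNIV. \<bar>A$i0$j\<bar>)" using vi0 by simp
    also have "\<dots> \<le> (\<Sum>j\<in>UNIV. \<bar>R' x (Elin (axis j 1)) $ i0\<bar>)"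
      by (intro sum_mono) (simp add: Aij DRed_def)
    also have "\<dots> \<le> g x" unfolding g_def
      by (rule member_le_sum[of i0 _ "\<lambda>i. \<Sum>j\<in>UNIV. \<bar>R' x (Elin (axis j 1)) $ i\<bar>"]) (auto intro: sum_nonneg)
    also have "\<dots> \<le> G" using G[OF x] by simp
    finally show ?thesis using complex_Re_le_cmod[of lam] by linarith
  qed
  then show ?thesis unfolding bdd_above_def Eset_def by blast
qed

lemma no_eigen:
  assumes x: "x \<in> D" and M: "M > Mlow pop f" and v0: "v \<noteq> 0" and vd: "\<And>s. dropped pop s \<Longrightarrow> v$s = 0"
    and ev: "DRed x v = M *\<^sub>R v"
  shows False
proof -
  define w where "w = (\<chi> s. complex_of_real (v$s))"
  have "w \<noteq> 0" using v0 by (simp add: w_def vec_eq_iff)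
  moreover have "\<forall>s. dropped pop s \<longrightarrow> w$s = 0" using vd by (simp add: w_def)
  moreover have "(\<chi> i j. complex_of_real (reduced_jacobian pop f x $ i $ j)) *v w = complex_of_real M *s w"
  proof -
    have e: "(\<Sum>j\<in>UNIV. complex_of_real (reduced_jacobian pop f x $ i $ j) * complex_of_real (v$j))
        = complex_of_real M * complex_of_real (v$i)" for i
    proof -
      have "(\<Sum>j\<in>UNIV. complex_of_real (reduced_jacobian pop f x $ i $ j) * complex_of_real (v$j))
        = complex_of_real ((reduced_jacobian pop f x *v v) $ i)"
        by (simp add: matrix_vector_mult_def)
      also have "\<dots> = complex_of_real (M * v$i)" using ev by (simp add: jac[OF x])
      finally show ?thesis by simp
    qed
    then show ?thesis by (simp add: matrix_vector_mult_def vector_scalar_mult_def w_def vec_eq_iff)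
  qed
  ultimately have "reduced_eigenvalue pop f x (complex_of_real M)" unfolding reduced_eigenvalue_def by blast
  then have "M \<in> Eset" unfolding Eset_def using x by force
  then have "M \<le> Sup Eset" using Eset_bdd by (rule cSup_upper)
  moreover have "Sup Eset \<le> Mlow pop f" using \<open>M \<in> Eset\<close> by (auto simp: Mlow_eq)
  ultimately show False using M by simp
qed

end



lemma dist_pair_same: "dist (M, z) (M0, z) = dist M M0"
  by (simp add: dist_Pair_Pair)

lemma dist_pair_le: "dist (a, b) (c, d) \<le> dist a c + dist b d"
  unfolding dist_Pair_Pair by (rule sqrt_sum_squares_le_sum) auto

context RM begin

definition H :: "real \<times> (real,'s) vec \<Rightarrow> (real,'s) vec" where
  "H p = (\<chi> s. if dropped pop s then (\<Sum>t\<in>PS (pop s). snd p $ t) - 1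
              else repl pop f (snd p) $ s - fst p * (snd p $ s - c$s))"

definition Hd :: "real \<times> (real,'s) vec \<Rightarrow> real \<times> (real,'s) vec \<Rightarrow> (real,'s) vec" where
  "Hd p q = (\<chi> s. if dropped pop s then (\<Sum>t\<in>PS (pop s). snd q $ t)
              else R' (snd p) (snd q) $ s - (fst q * (snd p $ s - c$s) + fst p * snd q $ s))"

definition "Psi p = (fst p, H p)"
definition "Psid p q = (fst q, Hd p q)"

lemma sndvec: "((\<lambda>p::real \<times> (real,'s) vec. snd p $ t) has_derivative (\<lambda>q. snd q $ t)) F"
  by (rule has_derivative_vec_nth'[OF has_derivative_snd[OF has_derivative_ident]])

lemma der_H: assumes pU: "snd p \<in> U" shows "(H has_derivative Hd p) (at p)"
proof -
  have "((\<lambda>p. H p $ s) has_derivative (\<lambda>q. Hd p q $ s)) (at p)" for s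
  proof (cases "dropped pop s")
    case True
    have "((\<lambda>p. (\<Sum>t\<in>PS (pop s). snd p $ t) - 1) has_derivative (\<lambda>q. (\<Sum>t\<in>PS (pop s). snd q $ t) - 0)) (at p)"
      by (intro has_derivative_diff has_derivative_sum has_derivative_const sndvec)
    then show ?thesis using True by (simp add: H_def Hd_def)
  next
    case False
    have r: "((\<lambda>p. repl pop f (snd p) $ s) has_derivative (\<lambda>q. R' (snd p) (snd q) $ s)) (at p)"
      by (rule has_derivative_vec_nth'[OF has_derivative_compose[OF has_derivative_snd[OF has_derivative_ident] der_repl[OF pU]]])
    have m: "((\<lambda>p. fst p * (snd p $ s - c$s)) has_derivative (\<lambda>q. fst p * (snd q $ s - 0) + fst q * (snd p $ s - c$s))) (at p)"
      by (rule has_derivative_mult[OF has_derivative_fst[OF has_derivative_ident] has_derivative_diff[OF sndvec has_derivative_const]])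
    have "((\<lambda>p. repl pop f (snd p) $ s - fst p * (snd p $ s - c$s)) has_derivative
       (\<lambda>q. R' (snd p) (snd q) $ s - (fst p * (snd q $ s - 0) + fst q * (snd p $ s - c$s)))) (at p)"
      by (rule has_derivative_diff[OF r m])
    then show ?thesis using False by (simp add: H_def Hd_def algebra_simps)
  qed
  from has_derivative_vec_lambda[of "\<lambda>s p. H p $ s" "\<lambda>s q. Hd p q $ s", OF this]
  show ?thesis by (simp add: vec_lambda_eta)
qed

lemma der_Psi: assumes "snd p \<in> U" shows "(Psi has_derivative Psid p) (at p)"
  unfolding Psi_def[abs_def] Psid_def[abs_def]
  by (rule has_derivative_Pair[OF has_derivative_fst[OF has_derivative_ident] der_H[OF assms]])

lemma bl_Psid: "snd p \<in> U \<Longrightarrow> bounded_linear (Psid p)"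
  using der_Psi by (rule has_derivative_bounded_linear)

definition "Psidb p = Blinfun (Psid p)"

lemma Psidb_apply: "snd p \<in> U \<Longrightarrow> blinfun_apply (Psidb p) = Psid p"
  unfolding Psidb_def by (rule bounded_linear_Blinfun_apply[OF bl_Psid])

lemma cont_Psid: "continuous_on (UNIV \<times> U) (\<lambda>p. Psid p q)"
proof -
  have cR: "continuous_on (UNIV \<times> U) (\<lambda>p. R' (snd p) (snd q))"
    by (rule continuous_on_compose2[OF cont_R'[of "snd q"]]) (auto intro: continuous_intros)
  have "continuous_on (UNIV \<times> U) (\<lambda>p. Hd p q $ s)" for s
  proof (cases "dropped pop s")
    case True then show ?thesis by (simp add: Hd_def)
  next
    case False
    have "continuous_on (UNIV \<times> U) (\<lambda>p. R' (snd p) (snd q) $ s - (fst q * (snd p $ s - c$s) + fst p * snd q $ s))"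
      by (intro continuous_intros cR)
    then show ?thesis using False by (simp add: Hd_def)
  qed
  then have "continuous_on (UNIV \<times> U) (\<lambda>p. \<chi> s. Hd p q $ s)" by (rule continuous_on_vec_lambda)
  then show ?thesis unfolding Psid_def by (intro continuous_intros) (simp add: vec_lambda_eta)
qed

lemma cont_Psidb: "continuous_on (UNIV \<times> U) Psidb"
proof (rule continuous_on_blinfun_componentwise)
  fix i :: "real \<times> (real,'s) vec"
  show "continuous_on (UNIV \<times> U) (\<lambda>p. blinfun_apply (Psidb p) i)"
    using cont_Psid[of i] by (rule continuous_on_eq) (auto simp: Psidb_apply)
qed

lemma H_P: assumes x: "x \<in> P M" shows "H (M, x) = 0"
proof -
  have xD: "x \<in> D" and e: "repl_mut pop f M c x = 0" using x by (auto simp: P_def)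
  have "H (M, x) $ s = 0" for s
  proof (cases "dropped pop s")
    case True then show ?thesis using D_sum[OF xD] by (simp add: H_def)
  next
    case False
    have "repl_mut pop f M c x $ s = 0" using e by simp
    then show ?thesis using False by (simp add: H_def repl_mut_def algebra_simps)
  qed
  then show ?thesis by (simp add: vec_eq_iff)
qed

lemma P_H: assumes h: "H (M, y) = 0" and pos: "\<And>s. 0 \<le> y$s" shows "y \<in> P M"
proof -
  have hs: "H (M, y) $ s = 0" for s using h by simp
  have sums: "(\<Sum>t\<in>PS i. y$t) = 1" for i
    using hs[of "last_type pop i"] dropped_last[of i] last_in[of i] by (simp add: H_def)
  have yD: "y \<in> D" using sums pos by (simp add: pop_simplex_def)
  have nd: "repl_mut pop f M c y $ s = 0" if "\<not> dropped pop s" for s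
    using hs[of s] that by (simp add: H_def repl_mut_def algebra_simps)
  have "repl_mut pop f M c y $ s = 0" for s
  proof (cases "dropped pop s")
    case False then show ?thesis by (rule nd)
  next
    case True
    have "(\<Sum>t\<in>PS (pop s). repl_mut pop f M c y $ t) = (\<Sum>t\<in>PS (pop s). repl pop f y $ t) + M * ((\<Sum>t\<in>PS (pop s). c$t) - (\<Sum>t\<in>PS (pop s). y$t))"
      by (simp add: repl_mut_def sum.distrib sum_distrib_left right_diff_distrib sum_subtractf)
    also have "\<dots> = 0" using repl_sum[OF sums] sums D_sum[OF c_D] by simp
    finally have z: "(\<Sum>t\<in>PS (pop s). repl_mut pop f M c y $ t) = 0" .
    have "(\<Sum>t\<in>PS (pop s). repl_mut pop f M c y $ t) = repl_mut pop f M c y $ s + (\<Sum>t\<in>PS (pop s) - {s}. repl_mut pop f M c y $ t)"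
      by (rule sum.remove) auto
    moreover have "(\<Sum>t\<in>PS (pop s) - {s}. repl_mut pop f M c y $ t) = 0"
    proof (rule sum.neutral, rule ballI)
      fix t assume t: "t \<in> PS (pop s) - {s}"
      then have "\<not> dropped pop t" using dropped_unique[OF True, of t] by auto
      then show "repl_mut pop f M c y $ t = 0" by (rule nd)
    qed
    ultimately show ?thesis using z by simp
  qed
  then show ?thesis using yD by (simp add: P_def vec_eq_iff)
qed

lemma inj_Psid: assumes x0: "x0 \<in> D" and M0: "M0 > Mlow pop f" shows "inj (Psid (M0, x0))"
proof -
  have lin: "linear (Psid (M0, x0))" using bl_Psid[of "(M0,x0)"] x0 sU by (auto simp: bounded_linear.linear)
  have z: "q = 0" if q0: "Psid (M0, x0) q = 0" for q
  proof -
    obtain a h where q: "q = (a, h)" by (cases q)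
    have pz: "(a, Hd (M0, x0) (a, h)) = (0, 0)" using q0 q by (auto simp: Psid_def zero_prod_def)
    have a: "a = 0" using arg_cong[OF pz, of fst] by simp
    have Hz: "Hd (M0, x0) (a, h) = 0" using arg_cong[OF pz, of snd] by simp
    have Hq: "Hd (M0, x0) (a, h) $ s = 0" for s by (simp only: Hz zero_index)
    have hs: "(\<Sum>t\<in>PS i. h$t) = 0" for i
      using Hq[of "last_type pop i"] dropped_last[of i] last_in[of i] by (simp add: Hd_def)
    have hn: "R' x0 h $ s = M0 * h$s" if "\<not> dropped pop s" for s
      using Hq[of s] that a by (simp add: Hd_def)
    have Eh: "Elin h = h"
    proof -
      have "Elin h $ s = h $ s" for s
      proof (cases "dropped pop s")
        case True
        have "(\<Sum>t\<in>PS (pop s). h$t) = h$s + (\<Sum>t\<in>PS (pop s) - {s}. h$t)" by (rule sum.remove) auto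
        moreover have "PS (pop s) - {s} = {t. pop t = pop s \<and> t \<noteq> s}" by auto
        ultimately show ?thesis using True hs[of "pop s"] by (simp add: Elin_def)
      qed (simp add: Elin_def)
      then show ?thesis by (simp add: vec_eq_iff)
    qed
    define v where "v = (\<chi> s. if dropped pop s then 0 else h$s)"
    have Ev: "Elin v = Elin h"
    proof -
      have "Elin v $ s = Elin h $ s" for s
      proof (cases "dropped pop s")
        case True
        have "(\<Sum>t\<in>{t. pop t = pop s \<and> t \<noteq> s}. v$t) = (\<Sum>t\<in>{t. pop t = pop s \<and> t \<noteq> s}. h$t)"
        proof (rule sum.cong)
          fix t assume "t \<in> {t. pop t = pop s \<and> t \<noteq> s}"
          then have "\<not> dropped pop t" using dropped_unique[OF True, of t] by auto
          then show "v$t = h$t" by (simp add: v_def)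
        qed simp
        then show ?thesis using True by (simp add: Elin_def)
      qed (simp add: Elin_def v_def)
      then show ?thesis by (simp add: vec_eq_iff)
    qed
    have "v = 0"
    proof (rule ccontr)
      assume "v \<noteq> 0"
      moreover have "\<And>s. dropped pop s \<Longrightarrow> v$s = 0" by (simp add: v_def)
      moreover have "DRed x0 v = M0 *\<^sub>R v"
        unfolding DRed_def Ev Eh by (simp add: hn v_def vec_eq_iff)
      ultimately show False by (rule no_eigen[OF x0 M0])
    qed
    moreover have "h = Elin v" using Eh Ev by simp
    ultimately have "h = 0" by (simp add: Elin_def vec_eq_iff)
    then show ?thesis using a q by (simp add: zero_prod_def)
  qed
  show ?thesis
  proof (rule injI)
    fix a b assume "Psid (M0, x0) a = Psid (M0, x0) b"
    then have "Psid (M0, x0) (a - b) = 0" by (simp add: linear_diff[OF lin])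
    then have "a - b = 0" by (rule z)
    then show "a = b" by simp
  qed
qed

end



context RM begin

lemma loc:
  assumes M0: "M0 > Mlow pop f" and x0: "x0 \<in> P M0"
  shows "\<exists>e>0. \<exists>d>0. \<exists>b b'. continuous_on (ball M0 e) b \<and> b M0 = x0 \<and>
     (\<forall>M\<in>ball M0 e. b M \<in> P M \<and> (b has_vector_derivative b' M) (at M)) \<and>
     continuous_on (ball M0 e) b' \<and> (\<forall>M\<in>ball M0 e. \<forall>x\<in>P M. dist x x0 < d \<longrightarrow> x = b M)"
proof -
  define p0 where "p0 = (M0, x0)"
  define W where "W = (UNIV :: real set) \<times> U"
  have x0D: "x0 \<in> D" using x0 by (simp add: P_def)
  have x0U: "x0 \<in> U" using x0D sU by blast
  have Psi0: "Psi p0 = (M0, 0)" using H_P[OF x0] by (simp add: Psi_def p0_def)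
  have oW: "open W" unfolding W_def using oU by (simp add: open_Times)
  have p0W: "p0 \<in> W" using x0U by (simp add: W_def p0_def)
  have derW: "(Psi has_derivative blinfun_apply (Psidb p)) (at p)" if "p \<in> W" for p
    using that der_Psi[of p] Psidb_apply[of p] by (auto simp: W_def)
  have contW: "continuous_on W Psidb" unfolding W_def by (rule cont_Psidb)
  have linP: "linear (Psid p0)" using bl_Psid[of p0] x0U by (simp add: p0_def bounded_linear.linear)
  have injP: "inj (Psid p0)" unfolding p0_def using inj_Psid[OF x0D M0] .
  obtain gl where gl: "linear gl" "gl \<circ> Psid p0 = id"
    using linear_injective_left_inverse[OF linP injP] by blast
  have blgl: "bounded_linear gl" using gl(1) by (simp add: linear_conv_bounded_linear)
  define invf where "invf = Blinfun gl"
  have invf: "invf o\<^sub>L Psidb p0 = id_blinfun"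
  proof (rule blinfun_eqI)
    fix i
    have "gl (Psid p0 i) = i" using gl(2) by (metis comp_apply id_apply)
    then show "blinfun_apply (invf o\<^sub>L Psidb p0) i = blinfun_apply id_blinfun i"
      using Psidb_apply[of p0] x0U bounded_linear_Blinfun_apply[OF blgl]
      by (simp add: invf_def p0_def)
  qed
  obtain U' V gi g' where oU': "open U'" and U'W: "U' \<subseteq> W" and p0U': "p0 \<in> U'" and oV: "open V"
    and PsiV: "Psi p0 \<in> V" and hom: "homeomorphism U' V Psi gi"
    and dergi: "\<And>y. y \<in> V \<Longrightarrow> (gi has_derivative g' y) (at y)"
    and g'eq: "\<And>y. y \<in> V \<Longrightarrow> g' y = inv (blinfun_apply (Psidb (gi y)))"
    and bij: "\<And>y. y \<in> V \<Longrightarrow> bij (blinfun_apply (Psidb (gi y)))"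
    using inverse_function_theorem[OF oW derW contW p0W invf] by blast
  have gPsi: "\<And>x. x \<in> U' \<Longrightarrow> gi (Psi x) = x" and Psig: "\<And>y. y \<in> V \<Longrightarrow> Psi (gi y) = y"
    and gV: "gi ` V = U'" and cgi: "continuous_on V gi"
    using hom unfolding homeomorphism_def by auto
  obtain r1 where r1: "r1 > 0" "ball p0 r1 \<subseteq> U'" using oU' p0U' open_contains_ball by blast
  obtain r2 where r2: "r2 > 0" "ball (M0, 0) r2 \<subseteq> V" using oV PsiV Psi0 open_contains_ball by force
  have inV: "(M, 0) \<in> V" if "M \<in> ball M0 r2" for M
    using that r2(2) by (auto simp: dist_pair_same dist_commute)
  have M0pos: "M0 > 0" using M0 Mlow_nonneg by linarith
  define m where "m = Min (range (\<lambda>s. x0$s))"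
  have m: "m > 0" unfolding m_def using P_pos[OF M0pos x0] by (subst Min_gr_iff) auto
  have mle: "m \<le> x0$s" for s unfolding m_def by (rule Min_le) auto
  define b where "b = (\<lambda>M. snd (gi (M, 0)))"
  have cgM: "continuous_on (ball M0 r2) (\<lambda>M. gi (M, 0))"
    by (rule continuous_on_compose2[OF cgi]) (auto intro!: continuous_intros inV)
  have cb: "continuous_on (ball M0 r2) b" unfolding b_def using cgM by (rule continuous_on_snd)
  have gi0: "gi (M0, 0) = p0" using gPsi[OF p0U'] Psi0 by simp
  have bM0: "b M0 = x0" using gi0 by (simp add: b_def p0_def)
  obtain e3 where e3: "e3 > 0" "\<And>M. M \<in> ball M0 r2 \<Longrightarrow> dist M M0 < e3 \<Longrightarrow> dist (b M) x0 < m"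
    using cb m r2(1) unfolding continuous_on_iff by (metis bM0 centre_in_ball)
  define e where "e = min (min r2 e3) (r1/2)"
  have e: "e > 0" using r1 r2 e3 by (simp add: e_def)
  have inr2: "M \<in> ball M0 r2" if "M \<in> ball M0 e" for M using that by (auto simp: e_def)
  have gM: "gi (M, 0) = (M, b M)" and gMU: "gi (M, 0) \<in> U'" if M: "M \<in> ball M0 e" for M
  proof -
    have "Psi (gi (M, 0)) = (M, 0)" using Psig[OF inV[OF inr2[OF M]]] .
    then have "fst (gi (M, 0)) = M" by (simp add: Psi_def)
    then show "gi (M, 0) = (M, b M)" by (simp add: b_def prod_eq_iff)
    show "gi (M, 0) \<in> U'" using gV inV[OF inr2[OF M]] by blast
  qed
  have bP: "b M \<in> P M" if M: "M \<in> ball M0 e" for M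
  proof -
    have "Psi (gi (M, 0)) = (M, 0)" using Psig[OF inV[OF inr2[OF M]]] .
    then have Hz: "H (M, b M) = 0" using gM[OF M] by (simp add: Psi_def)
    have "dist (b M) x0 < m" using e3(2)[OF inr2[OF M]] M by (auto simp: e_def dist_commute)
    then have "0 \<le> b M $ s" for s
      using comp_le[of "b M" s x0] mle[of s] by (simp add: dist_norm) 
    then show ?thesis by (rule P_H[OF Hz])
  qed
  define b' where "b' = (\<lambda>M. snd (inv (blinfun_apply (Psidb (gi (M, 0)))) (1, 0)))"
  have derb: "(b has_vector_derivative b' M) (at M)" if M: "M \<in> ball M0 e" for M
  proof -
    have V: "(M, 0) \<in> V" using inV[OF inr2[OF M]] .
    have d1: "((\<lambda>t. (t, 0::(real,'s) vec)) has_derivative (\<lambda>t. (t, 0))) (at M)"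
      by (rule has_derivative_Pair[OF has_derivative_ident has_derivative_const])
    have d2: "((\<lambda>t. gi (t, 0)) has_derivative (\<lambda>t. g' (M, 0) (t, 0))) (at M)"
      using has_derivative_compose[OF d1 dergi[OF V]] by simp
    have d3: "(b has_derivative (\<lambda>t. snd (g' (M, 0) (t, 0)))) (at M)"
      unfolding b_def by (rule has_derivative_snd[OF d2])
    have lin: "linear (g' (M, 0))" using dergi[OF V] by (rule has_derivative_linear)
    have "snd (g' (M, 0) (t, 0)) = t *\<^sub>R b' M" for t
    proof -
      have "(t, 0::(real,'s) vec) = t *\<^sub>R (1, 0)" by simp
      then have "g' (M, 0) (t, 0) = t *\<^sub>R g' (M, 0) (1, 0)" by (metis lin linear_scale)
      then show ?thesis by (simp add: b'_def g'eq[OF V])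
    qed
    then show ?thesis using d3 unfolding has_vector_derivative_def by simp
  qed
  have cb': "continuous_on (ball M0 e) b'"
  proof -
    have cA: "continuous_on (ball M0 e) (\<lambda>M. Psidb (gi (M, 0)))"
      by (rule continuous_on_compose2[OF contW continuous_on_subset[OF cgM]])
         (use gMU U'W inr2 in auto)
    have "continuous_on (ball M0 e) (\<lambda>M. inv (blinfun_apply (Psidb (gi (M, 0)))) (1, 0))"
      by (rule cont_inv_apply[OF cA]) (use bij inV inr2 in auto)
    then show ?thesis unfolding b'_def by (rule continuous_on_snd)
  qed
  have uniq: "x = b M" if M: "M \<in> ball M0 e" and x: "x \<in> P M" and dx: "dist x x0 < r1/2" for M x
  proof -
    have "dist (M, x) p0 \<le> dist M M0 + dist x x0" unfolding p0_def by (rule dist_pair_le)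
    also have "\<dots> < r1/2 + r1/2" using M dx by (intro add_strict_mono) (auto simp: e_def dist_commute)
    finally have "(M, x) \<in> U'" using r1(2) by (auto simp: dist_commute)
    moreover have "Psi (M, x) = (M, 0)" using H_P[OF x] by (simp add: Psi_def)
    ultimately have "gi (M, 0) = (M, x)" using gPsi by metis
    then show ?thesis using gM[OF M] by simp
  qed
  show ?thesis
  proof (intro exI conjI)
    show "e > 0" by (rule e)
    show "r1/2 > 0" using r1 by simp
    show "continuous_on (ball M0 e) b" using cb by (rule continuous_on_subset) (auto simp: e_def)
    show "b M0 = x0" by (rule bM0)
    show "\<forall>M\<in>ball M0 e. b M \<in> P M \<and> (b has_vector_derivative b' M) (at M)" using bP derb by blast
    show "continuous_on (ball M0 e) b'" by (rule cb')
    show "\<forall>M\<in>ball M0 e. \<forall>x\<in>P M. dist x x0 < r1/2 \<longrightarrow> x = b M" using uniq by blast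
  qed
qed

end

context RM begin

lemma main_unique: "\<forall>M > Mlow pop f. \<exists>!x. x \<in> P M"
proof (rule continuation_unique[where K=D])
  show "P M \<noteq> {}" if "M > Mlow pop f" for M using exists_eq Mlow_nonneg that by force
  show "\<exists>M>Mlow pop f. \<forall>x\<in>P M. \<forall>y\<in>P M. x = y"
  proof -
    obtain L where L: "\<forall>M>L. \<forall>x\<in>P M. \<forall>y\<in>P M. x = y" using big_unique by blast
    define M1 where "M1 = max L (Mlow pop f) + 1"
    have M1: "M1 > L" "M1 > Mlow pop f" by (auto simp: M1_def)
    have "\<forall>x\<in>P M1. \<forall>y\<in>P M1. x = y" using L M1(1) by blast
    then show ?thesis using M1(2) by blast
  qed
  show "compact D" by (rule D_compact)
  show "P M \<subseteq> D" for M by (auto simp: P_def)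
  show "x \<in> P M" if "\<And>n. xn n \<in> P (Mn n)" "Mn \<longlonglongrightarrow> M" "xn \<longlonglongrightarrow> x" for Mn xn M x
    using P_closed that by blast
  show "\<exists>e>0. \<exists>d>0. \<exists>b. continuous_on (ball M0 e) b \<and> b M0 = x0 \<and> (\<forall>M\<in>ball M0 e. b M \<in> P M) \<and>
        (\<forall>M\<in>ball M0 e. \<forall>x\<in>P M. dist x x0 < d \<longrightarrow> x = b M)" if "M0 > Mlow pop f" "x0 \<in> P M0" for M0 x0
    using loc[OF that] by blast
qed

lemma main_C1: "(\<lambda>M. THE x. x \<in> P M) C1_differentiable_on {Mlow pop f<..}"
proof (rule continuation_C1[OF main_unique])
  show "\<exists>e>0. \<exists>b b'. (\<forall>M\<in>ball M0 e. b M \<in> P M \<and> (b has_vector_derivative b' M) (at M)) \<and> continuous_on (ball M0 e) b'"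
    if "M0 > Mlow pop f" "x0 \<in> P M0" for M0 x0
    using loc[OF that] by blast
qed

end

theorem mainTheorem6:
  fixes pop :: "'s::{finite,linorder} \<Rightarrow> 'i"
    and f :: "'s \<Rightarrow> (real,'s) vec \<Rightarrow> real"
    and f' :: "'s \<Rightarrow> (real,'s) vec \<Rightarrow> (real,'s) vec \<Rightarrow>\<^sub>L real"
    and U :: "((real,'s) vec) set"
    and c :: "(real,'s) vec"
  assumes "surj pop"
    and "open U" and "pop_simplex pop \<subseteq> U"
    and "\<forall>s. \<forall>x\<in>U. (f s has_derivative blinfun_apply (f' s x)) (at x)"
    and "\<forall>s. continuous_on U (f' s)"
    and "\<forall>s t. \<forall>x\<in>U. pop s = pop t \<longrightarrow> blinfun_apply (f' s x) (axis t 1) = 0"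
    and "c \<in> int_simplex pop"
  shows "(\<forall>M > Mlow pop f. \<exists>!x. x \<in> pop_simplex pop \<and> repl_mut pop f M c x = 0) \<and>
         (\<lambda>M. THE x. x \<in> pop_simplex pop \<and> repl_mut pop f M c x = 0) C1_differentiable_on {Mlow pop f<..}"
proof -
  interpret RM pop f f' U c
    using assms by unfold_locales auto
  show ?thesis using main_unique main_C1 by (simp add: P_def)
qed

end
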